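(* In the large-election setting of the context, let $\rho=\frac{q-1/2}{1-q}$. If $v_\ell/v_w>\rho$, there exists $\lambda^*>0$ such that for every $\lambda\in(0,\lambda^* )$ and every $\varepsilon\in(0,1)$ there is $N_\varepsilon$ such that for all odd $n>N_\varepsilon$ the $n$-voter problem (with this $\lambda$) has a strict equilibrium in which the inferior policy $p_*$ wins with probability at least $1-\varepsilon$. Otherwise (if $v_\ell/v_w\le\rho$), for every odd population size $n$ and every $\lambda\in(0,1)$, the optimal policy $p^*$ wins with probability $1$ in every equilibrium.
   Context: Fix $q\in[1/2,1)$ and $v_w,v_\ell>0$ with $v_\ell/v_w<q/(1-q)$. For each odd $n\ge3$ and $\lambda\in(0,1)$, the $n$-voter collective choice problem is: voters $1,\dots,n$ vote for $p^*$ or $p_*$; a policy wins iff it gets more than $(n-1)/2$ votes. Exactly $\lceil qn\rceil$ voters are winners, the set of winners uniformly distributed among subsets of that size; a winner's payoff from $p^*$ exceeds that from $p_*$ by $v_w$, a loser's is lower by $v_\ell$. Independently, each voter with probability $\lambda$ privately learns whether she is a winner, and otherwise receives an uninformative signal. A strategy maps a voter's signal to a probability of voting $p^*$. "Equilibrium" means Bayes–Nash equilibrium in weakly undominated strategies (informed winners vote $p^*$, informed losers vote $p_*$); a strict equilibrium is one where each voter's strategy is her unique best response. *)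

theory Defs
  imports Complex_Main
begin

datatype signal = WinSig | LoseSig | NoSig

definition num_winners :: "nat \<Rightarrow> real \<Rightarrow> nat" where
  "num_winners n q = nat \<lceil>q * real n\<rceil>"

text \<open>Possible winner sets (uniformly distributed).\<close>
definition winner_sets :: "nat \<Rightarrow> real \<Rightarrow> nat set set" where
  "winner_sets n q = {W. W \<subseteq> {..<n} \<and> card W = num_winners n q}"

text \<open>A strategy profile: sigma i s = probability that voter i votes p* after signal s.
  Probability that voter j votes p* given whether she is a winner.\<close>
definition vote_prob :: "real \<Rightarrow> (nat \<Rightarrow> signal \<Rightarrow> real) \<Rightarrow> nat \<Rightarrow> bool \<Rightarrow> real" where
  "vote_prob lam \<sigma> j w = lam * \<sigma> j (if w then WinSig else LoseSig) + (1 - lam) * \<sigma> j NoSig"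

text \<open>Probability (given winner set W) that exactly the voters in V (among the voters in A)
  vote p*, votes being conditionally independent.\<close>
definition prob_votes ::
  "real \<Rightarrow> (nat \<Rightarrow> signal \<Rightarrow> real) \<Rightarrow> nat set \<Rightarrow> nat set \<Rightarrow> nat set \<Rightarrow> real" where
  "prob_votes lam \<sigma> W A V =
     (\<Prod>j\<in>A. if j \<in> V then vote_prob lam \<sigma> j (j \<in> W) else 1 - vote_prob lam \<sigma> j (j \<in> W))"

definition pstar_wins :: "nat \<Rightarrow> nat set \<Rightarrow> bool" where
  "pstar_wins n V \<longleftrightarrow> (n - 1) div 2 < card V"

definition win_prob :: "nat \<Rightarrow> real \<Rightarrow> real \<Rightarrow> (nat \<Rightarrow> signal \<Rightarrow> real) \<Rightarrow> real" where
  "win_prob n q lam \<sigma> =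
     (\<Sum>W\<in>winner_sets n q. \<Sum>V\<in>Pow {..<n}.
        if pstar_wins n V then prob_votes lam \<sigma> W {..<n} V else 0)
     / real (card (winner_sets n q))"

text \<open>Payoff of voter i (winner set W) when p* wins (b = True) or p_* wins (b = False);
  a winner gains vw from p*, a loser gains vl from p_*.\<close>
definition util :: "real \<Rightarrow> real \<Rightarrow> nat \<Rightarrow> nat set \<Rightarrow> bool \<Rightarrow> real" where
  "util vw vl i W b = (if i \<in> W then (if b then vw else 0) else (if b then 0 else vl))"

text \<open>Winner sets consistent with voter i's signal (posterior is uniform on this set).\<close>
definition cond_sets :: "nat \<Rightarrow> real \<Rightarrow> nat \<Rightarrow> signal \<Rightarrow> nat set set" where
  "cond_sets n q i s = (case s of
      WinSig \<Rightarrow> {W \<in> winner_sets n q. i \<in> W}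
    | LoseSig \<Rightarrow> {W \<in> winner_sets n q. i \<notin> W}
    | NoSig \<Rightarrow> winner_sets n q)"

text \<open>Interim expected payoff of voter i with signal s who votes p* with probability x,
  the others playing sigma.\<close>
definition interim_payoff ::
  "nat \<Rightarrow> real \<Rightarrow> real \<Rightarrow> real \<Rightarrow> real \<Rightarrow> (nat \<Rightarrow> signal \<Rightarrow> real) \<Rightarrow> nat \<Rightarrow> signal \<Rightarrow> real \<Rightarrow> real" where
  "interim_payoff n q lam vw vl \<sigma> i s x =
     (\<Sum>W\<in>cond_sets n q i s. \<Sum>V\<in>Pow ({..<n} - {i}).
        prob_votes lam \<sigma> W ({..<n} - {i}) V *
          (x * util vw vl i W (pstar_wins n (insert i V))
           + (1 - x) * util vw vl i W (pstar_wins n V)))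
     / real (card (cond_sets n q i s))"

definition valid_profile :: "nat \<Rightarrow> (nat \<Rightarrow> signal \<Rightarrow> real) \<Rightarrow> bool" where
  "valid_profile n \<sigma> \<longleftrightarrow> (\<forall>i<n. \<forall>s. 0 \<le> \<sigma> i s \<and> \<sigma> i s \<le> 1)"

text \<open>Weakly undominated: informed winners vote p*, informed losers vote p_*.\<close>
definition undominated :: "nat \<Rightarrow> (nat \<Rightarrow> signal \<Rightarrow> real) \<Rightarrow> bool" where
  "undominated n \<sigma> \<longleftrightarrow> (\<forall>i<n. \<sigma> i WinSig = 1 \<and> \<sigma> i LoseSig = 0)"

text \<open>Bayes-Nash equilibrium in weakly undominated strategies (best response at every
  signal that occurs with positive probability; for lam in (0,1) these are exactly the
  signals with nonempty cond_sets).\<close>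
definition is_equilibrium ::
  "nat \<Rightarrow> real \<Rightarrow> real \<Rightarrow> real \<Rightarrow> real \<Rightarrow> (nat \<Rightarrow> signal \<Rightarrow> real) \<Rightarrow> bool" where
  "is_equilibrium n q lam vw vl \<sigma> \<longleftrightarrow>
     valid_profile n \<sigma> \<and> undominated n \<sigma> \<and>
     (\<forall>i<n. \<forall>s. cond_sets n q i s \<noteq> {} \<longrightarrow>
        (\<forall>x\<in>{0..1}. interim_payoff n q lam vw vl \<sigma> i s x
                     \<le> interim_payoff n q lam vw vl \<sigma> i s (\<sigma> i s)))"

definition is_strict_equilibrium ::
  "nat \<Rightarrow> real \<Rightarrow> real \<Rightarrow> real \<Rightarrow> real \<Rightarrow> (nat \<Rightarrow> signal \<Rightarrow> real) \<Rightarrow> bool" where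
  "is_strict_equilibrium n q lam vw vl \<sigma> \<longleftrightarrow>
     valid_profile n \<sigma> \<and> undominated n \<sigma> \<and>
     (\<forall>i<n. \<forall>s. cond_sets n q i s \<noteq> {} \<longrightarrow>
        (\<forall>x\<in>{0..1}. x \<noteq> \<sigma> i s \<longrightarrow> interim_payoff n q lam vw vl \<sigma> i s x
                     < interim_payoff n q lam vw vl \<sigma> i s (\<sigma> i s)))"

end

theory Submission
  imports Defs
begin

lemma binom_step: "Suc k * (M choose Suc k) = (M - k) * (M choose k)"
  using binomial_absorption binomial_absorb_comp by metis

lemma prod_if_split:
  assumes "finite A" "V \<subseteq> A"
  shows "(\<Prod>j\<in>A. if j \<in> V then f j else g j) = (\<Prod>j\<in>V. f j) * (\<Prod>j\<in>A - V. (g j::real))"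
proof -
  have "(\<Prod>j\<in>A. if j \<in> V then f j else g j) = prod f (A \<inter> {j. j \<in> V}) * prod g (A \<inter> - {j. j \<in> V})"
    using assms(1) by (rule prod.If_cases)
  moreover have "A \<inter> {j. j \<in> V} = V" "A \<inter> - {j. j \<in> V} = A - V" using assms(2) by auto
  ultimately show ?thesis by simp
qed

lemma prob_sum_one:
  assumes "finite A"
  shows "(\<Sum>V\<in>Pow A. \<Prod>j\<in>A. if j \<in> V then p j else 1 - p j) = (1::real)"
proof -
  have "(1::real) = (\<Prod>j\<in>A. p j + (1 - p j))" by simp
  also have "\<dots> = (\<Sum>X\<in>Pow A. (\<Prod>x\<in>X. p x) * (\<Prod>x\<in>A-X. 1 - p x))"
    using assms by (rule prod_add)
  also have "\<dots> = (\<Sum>V\<in>Pow A. \<Prod>j\<in>A. if j \<in> V then p j else 1 - p j)"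
    by (rule sum.cong[OF refl]) (simp add: prod_if_split[OF assms])
  finally show ?thesis by simp
qed

lemma ivt_sets:
  assumes "finite X"
  shows "(\<forall>Y x. Y \<subseteq> X \<and> x \<in> X \<longrightarrow> f (insert x Y) \<le> f Y + 1) \<Longrightarrow> f {} \<le> (t::nat) \<Longrightarrow> t \<le> f X
     \<Longrightarrow> \<exists>Y\<subseteq>X. f Y = t"
  using assms
proof (induction X rule: finite_induct)
  case empty
  then show ?case by auto
next
  case (insert x F)
  show ?case
  proof (cases "t \<le> f F")
    case True
    have "\<forall>Y x. Y \<subseteq> F \<and> x \<in> F \<longrightarrow> f (insert x Y) \<le> f Y + 1" using insert.prems(1) by blast
    then obtain Y where "Y \<subseteq> F" "f Y = t" using insert.IH insert.prems True by blast
    then show ?thesis by blast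
  next
    case False
    have "f (insert x F) \<le> f F + 1" using insert.prems(1) by blast
    then have "f (insert x F) = t" using False insert.prems(3) by linarith
    then show ?thesis by blast
  qed
qed

lemma K_le: "0 \<le> q \<Longrightarrow> q < 1 \<Longrightarrow> num_winners n q \<le> n"
proof -
  assume "0 \<le> q" "q < 1"
  then have "q * real n \<le> real n" using mult_right_mono[of q 1 "real n"] by simp
  then have "\<lceil>q * real n\<rceil> \<le> int n" by (intro ceiling_le) simp
  then show ?thesis unfolding num_winners_def by (metis nat_int nat_mono)
qed

lemma K_gt: "1/2 \<le> q \<Longrightarrow> odd n \<Longrightarrow> (n - 1) div 2 < num_winners n q"
proof -
  assume a: "1/2 \<le> q" "odd n"
  obtain j where j: "n = 2*j+1" using a(2) oddE by blast
  have "real ((n - 1) div 2) < real n / 2" using j by simp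
  also have "\<dots> \<le> q * real n" using a(1) mult_right_mono[of "1/2" q "real n"] by simp
  also have "\<dots> \<le> of_int \<lceil>q * real n\<rceil>" by (rule le_of_int_ceiling)
  finally have "int ((n - 1) div 2) < \<lceil>q * real n\<rceil>" by linarith
  then show ?thesis unfolding num_winners_def by linarith
qed

lemma ws_sub: "W \<in> winner_sets n q \<Longrightarrow> W \<subseteq> {..<n}"
  unfolding winner_sets_def by auto

lemma ws_card: "W \<in> winner_sets n q \<Longrightarrow> card W = num_winners n q"
  unfolding winner_sets_def by auto

lemma ws_finite: "finite (winner_sets n q)"
proof -
  have "winner_sets n q \<subseteq> Pow {..<n}" unfolding winner_sets_def by auto
  then show ?thesis by (rule finite_subset) simp
qed

definition Dg :: "nat \<Rightarrow> real \<Rightarrow> real \<Rightarrow> real \<Rightarrow> real \<Rightarrow> (nat \<Rightarrow> signal \<Rightarrow> real) \<Rightarrow> nat \<Rightarrow> nat set set \<Rightarrow> real" where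
  "Dg n q lam vw vl \<sigma> i C = (\<Sum>W\<in>C. \<Sum>V\<in>Pow ({..<n} - {i}).
        prob_votes lam \<sigma> W ({..<n} - {i}) V *
          (util vw vl i W (pstar_wins n (insert i V)) - util vw vl i W (pstar_wins n V)))"

lemma affine_gen:
  fixes p a b :: "'a \<Rightarrow> 'b \<Rightarrow> real"
  shows "(\<Sum>W\<in>C. \<Sum>V\<in>P. p W V * (x * a W V + (1 - x) * b W V)) / c =
    (\<Sum>W\<in>C. \<Sum>V\<in>P. p W V * (0 * a W V + (1 - 0) * b W V)) / c + x * (\<Sum>W\<in>C. \<Sum>V\<in>P. p W V * (a W V - b W V)) / c"
proof -
  have "(\<Sum>W\<in>C. \<Sum>V\<in>P. p W V * (x * a W V + (1 - x) * b W V)) =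
    (\<Sum>W\<in>C. \<Sum>V\<in>P. p W V * (0 * a W V + (1 - 0) * b W V)) + x * (\<Sum>W\<in>C. \<Sum>V\<in>P. p W V * (a W V - b W V))"
    by (simp add: sum_distrib_left sum.distrib[symmetric] algebra_simps)
  then show ?thesis by (simp add: add_divide_distrib)
qed

lemma interim_affine:
  "interim_payoff n q lam vw vl \<sigma> i s x = interim_payoff n q lam vw vl \<sigma> i s 0
     + x * Dg n q lam vw vl \<sigma> i (cond_sets n q i s) / real (card (cond_sets n q i s))"
  unfolding interim_payoff_def Dg_def by (rule affine_gen)

lemma util_diff:
  assumes "finite V" "i \<notin> V"
  shows "util vw vl i W (pstar_wins n (insert i V)) - util vw vl i W (pstar_wins n V)
     = (if card V = (n - 1) div 2 then (if i \<in> W then vw else - vl) else 0)"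
  using assms unfolding pstar_wins_def util_def by auto

lemma Dg_eq:
  "Dg n q lam vw vl \<sigma> i C = (\<Sum>W\<in>C. (if i \<in> W then vw else - vl) *
      (\<Sum>V\<in>{V\<in>Pow ({..<n} - {i}). card V = (n - 1) div 2}. prob_votes lam \<sigma> W ({..<n} - {i}) V))"
proof -
  have "(\<Sum>V\<in>Pow ({..<n} - {i}). prob_votes lam \<sigma> W ({..<n} - {i}) V *
          (util vw vl i W (pstar_wins n (insert i V)) - util vw vl i W (pstar_wins n V)))
     = (if i \<in> W then vw else - vl) *
      (\<Sum>V\<in>{V\<in>Pow ({..<n} - {i}). card V = (n - 1) div 2}. prob_votes lam \<sigma> W ({..<n} - {i}) V)" for W
  proof -
    have "(\<Sum>V\<in>Pow ({..<n} - {i}). prob_votes lam \<sigma> W ({..<n} - {i}) V *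
          (util vw vl i W (pstar_wins n (insert i V)) - util vw vl i W (pstar_wins n V)))
       = (\<Sum>V\<in>Pow ({..<n} - {i}). if card V = (n - 1) div 2 then (if i \<in> W then vw else - vl) * prob_votes lam \<sigma> W ({..<n} - {i}) V else 0)"
    proof (rule sum.cong[OF refl])
      fix V assume "V \<in> Pow ({..<n} - {i})"
      then have "finite V" "i \<notin> V" by (auto intro: finite_subset)
      then show "prob_votes lam \<sigma> W ({..<n} - {i}) V *
          (util vw vl i W (pstar_wins n (insert i V)) - util vw vl i W (pstar_wins n V)) =
          (if card V = (n - 1) div 2 then (if i \<in> W then vw else - vl) * prob_votes lam \<sigma> W ({..<n} - {i}) V else 0)"
        using util_diff[of V i vw vl W n] by simp
    qed
    also have "\<dots> = (\<Sum>V\<in>{V\<in>Pow ({..<n} - {i}). card V = (n - 1) div 2}. (if i \<in> W then vw else - vl) * prob_votes lam \<sigma> W ({..<n} - {i}) V)"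
      by (rule sum.inter_filter[symmetric]) simp
    also have "\<dots> = (if i \<in> W then vw else - vl) *
      (\<Sum>V\<in>{V\<in>Pow ({..<n} - {i}). card V = (n - 1) div 2}. prob_votes lam \<sigma> W ({..<n} - {i}) V)"
      by (simp add: sum_distrib_left)
    finally show ?thesis .
  qed
  then show ?thesis unfolding Dg_def by simp
qed

lemma card_g:
  assumes "finite S" "I \<subseteq> S" "X \<subseteq> S - I" "i \<notin> S"
  shows "card (insert i (V \<inter> I \<union> X)) = Suc (card (V \<inter> I) + card X)"
proof -
  have f: "finite (V \<inter> I)" "finite X" using assms by (auto intro: finite_subset)
  have "card (V \<inter> I \<union> X) = card (V \<inter> I) + card X"
    using f assms by (intro card_Un_disjoint) auto
  moreover have "i \<notin> V \<inter> I \<union> X" using assms by auto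
  ultimately show ?thesis using f by simp
qed

lemma card_g0:
  assumes "finite S" "I \<subseteq> S" "X \<subseteq> S - I"
  shows "card (V \<inter> I \<union> X) = card (V \<inter> I) + card X"
proof -
  have f: "finite (V \<inter> I)" "finite X" using assms by (auto intro: finite_subset)
  show ?thesis using f assms by (intro card_Un_disjoint) auto
qed

lemma cnt_in:
  assumes "i < n" "I \<subseteq> {..<n} - {i}" "card (V \<inter> I) < num_winners n q"
  shows "card {W \<in> winner_sets n q. i \<in> W \<and> W \<inter> I = V \<inter> I}
     = card ({..<n} - {i} - I) choose (num_winners n q - 1 - card (V \<inter> I))"
proof -
  define S where "S = {..<n} - {i}"
  define K where "K = num_winners n q"
  define t where "t = card (V \<inter> I)"
  have S: "finite S" "i \<notin> S" "I \<subseteq> S" using assms unfolding S_def by auto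
  let ?L = "{W \<in> winner_sets n q. i \<in> W \<and> W \<inter> I = V \<inter> I}"
  let ?R = "{X. X \<subseteq> S - I \<and> card X = K - 1 - t}"
  have "bij_betw (\<lambda>W. W \<inter> (S - I)) ?L ?R"
  proof (rule bij_betw_byWitness[where f'="\<lambda>X. insert i (V \<inter> I \<union> X)"])
    show "\<forall>W\<in>?L. insert i (V \<inter> I \<union> W \<inter> (S - I)) = W"
      using assms(1) by (auto simp: S_def dest: ws_sub)
    show "\<forall>X\<in>?R. insert i (V \<inter> I \<union> X) \<inter> (S - I) = X"
      using S by auto
    show "(\<lambda>W. W \<inter> (S - I)) ` ?L \<subseteq> ?R"
    proof
      fix X assume "X \<in> (\<lambda>W. W \<inter> (S - I)) ` ?L"
      then obtain W where W: "W \<in> ?L" "X = W \<inter> (S - I)" by blast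
      have "W = insert i (V \<inter> I \<union> X)" using W assms(1) by (auto simp: S_def dest: ws_sub)
      moreover have "X \<subseteq> S - I" using W by auto
      ultimately have "K = Suc (t + card X)" using W(1) ws_card[of W n q] card_g[OF S(1) S(3), of X i V] S
        unfolding K_def t_def by auto
      then show "X \<in> ?R" using W by auto
    qed
    show "(\<lambda>X. insert i (V \<inter> I \<union> X)) ` ?R \<subseteq> ?L"
    proof
      fix W assume "W \<in> (\<lambda>X. insert i (V \<inter> I \<union> X)) ` ?R"
      then obtain X where X: "X \<in> ?R" "W = insert i (V \<inter> I \<union> X)" by blast
      have "card W = Suc (t + card X)" using X card_g[OF S(1) S(3), of X i V] S unfolding t_def by auto
      then have cW: "card W = K" using X assms(3) unfolding t_def K_def by auto
      have "W \<subseteq> {..<n}" using X S assms(1,2) unfolding S_def by auto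
      moreover have "W \<inter> I = V \<inter> I" using X S by auto
      ultimately show "W \<in> ?L" using cW X unfolding winner_sets_def K_def by auto
    qed
  qed
  then have "card ?L = card ?R" by (rule bij_betw_same_card)
  also have "\<dots> = card (S - I) choose (K - 1 - t)" using S by (intro n_subsets) auto
  finally show ?thesis unfolding S_def K_def t_def .
qed

lemma cnt_out:
  assumes "i < n" "I \<subseteq> {..<n} - {i}" "card (V \<inter> I) \<le> num_winners n q"
  shows "card {W \<in> winner_sets n q. i \<notin> W \<and> W \<inter> I = V \<inter> I}
     = card ({..<n} - {i} - I) choose (num_winners n q - card (V \<inter> I))"
proof -
  define S where "S = {..<n} - {i}"
  define K where "K = num_winners n q"
  define t where "t = card (V \<inter> I)"
  have S: "finite S" "i \<notin> S" "I \<subseteq> S" using assms unfolding S_def by auto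
  let ?L = "{W \<in> winner_sets n q. i \<notin> W \<and> W \<inter> I = V \<inter> I}"
  let ?R = "{X. X \<subseteq> S - I \<and> card X = K - t}"
  have "bij_betw (\<lambda>W. W \<inter> (S - I)) ?L ?R"
  proof (rule bij_betw_byWitness[where f'="\<lambda>X. V \<inter> I \<union> X"])
    show "\<forall>W\<in>?L. V \<inter> I \<union> W \<inter> (S - I) = W"
      using assms(1) by (auto simp: S_def dest: ws_sub)
    show "\<forall>X\<in>?R. (V \<inter> I \<union> X) \<inter> (S - I) = X"
      using S by auto
    show "(\<lambda>W. W \<inter> (S - I)) ` ?L \<subseteq> ?R"
    proof
      fix X assume "X \<in> (\<lambda>W. W \<inter> (S - I)) ` ?L"
      then obtain W where W: "W \<in> ?L" "X = W \<inter> (S - I)" by blast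
      have "W = V \<inter> I \<union> X" using W assms(1) by (auto simp: S_def dest: ws_sub)
      moreover have "X \<subseteq> S - I" using W by auto
      ultimately have "K = t + card X" using W(1) ws_card[of W n q] card_g0[OF S(1) S(3), of X V] S
        unfolding K_def t_def by auto
      then show "X \<in> ?R" using W by auto
    qed
    show "(\<lambda>X. V \<inter> I \<union> X) ` ?R \<subseteq> ?L"
    proof
      fix W assume "W \<in> (\<lambda>X. V \<inter> I \<union> X) ` ?R"
      then obtain X where X: "X \<in> ?R" "W = V \<inter> I \<union> X" by blast
      have "card W = t + card X" using X card_g0[OF S(1) S(3), of X V] S unfolding t_def by auto
      then have cW: "card W = K" using X assms(3) unfolding t_def K_def by auto
      have "W \<subseteq> {..<n}" using X S assms(1,2) unfolding S_def by auto
      moreover have "W \<inter> I = V \<inter> I" "i \<notin> W" using X S by auto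
      ultimately show "W \<in> ?L" using cW X unfolding winner_sets_def K_def by auto
    qed
  qed
  then have "card ?L = card ?R" by (rule bij_betw_same_card)
  also have "\<dots> = card (S - I) choose (K - t)" using S by (intro n_subsets) auto
  finally show ?thesis unfolding S_def K_def t_def .
qed

definition rr :: "real \<Rightarrow> (nat \<Rightarrow> signal \<Rightarrow> real) \<Rightarrow> nat set \<Rightarrow> nat \<Rightarrow> real" where
  "rr lam \<sigma> V j = (if j \<in> V then (1 - lam) * \<sigma> j NoSig else (1 - lam) * (1 - \<sigma> j NoSig))"

lemma prod_ind: "finite I \<Longrightarrow> (\<Prod>j\<in>I. c * (if P j then 1 else 0)) = (if \<forall>j\<in>I. P j then c ^ card I else (0::real))"
  by (induction I rule: finite_induct) auto

lemma decomp:
  assumes "finite A" "\<forall>j\<in>A. \<sigma> j WinSig = 1 \<and> \<sigma> j LoseSig = 0"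
  shows "prob_votes lam \<sigma> W A V = (\<Sum>I\<in>Pow A. (if W \<inter> I = V \<inter> I then lam ^ card I else 0) * (\<Prod>j\<in>A - I. rr lam \<sigma> V j))"
proof -
  have "prob_votes lam \<sigma> W A V = (\<Prod>j\<in>A. lam * (if (j \<in> W) = (j \<in> V) then 1 else 0) + rr lam \<sigma> V j)"
    unfolding prob_votes_def
    by (rule prod.cong[OF refl]) (use assms(2) in \<open>auto simp: vote_prob_def rr_def algebra_simps\<close>)
  also have "\<dots> = (\<Sum>I\<in>Pow A. (\<Prod>j\<in>I. lam * (if (j \<in> W) = (j \<in> V) then 1 else 0)) * (\<Prod>j\<in>A - I. rr lam \<sigma> V j))"
    using assms(1) by (rule prod_add)
  also have "\<dots> = (\<Sum>I\<in>Pow A. (if W \<inter> I = V \<inter> I then lam ^ card I else 0) * (\<Prod>j\<in>A - I. rr lam \<sigma> V j))"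
  proof (rule sum.cong[OF refl])
    fix I assume "I \<in> Pow A"
    then have "finite I" using assms(1) by (auto intro: finite_subset)
    moreover have "(\<forall>j\<in>I. (j \<in> W) = (j \<in> V)) = (W \<inter> I = V \<inter> I)" by blast
    ultimately show "(\<Prod>j\<in>I. lam * (if (j \<in> W) = (j \<in> V) then 1 else 0)) * (\<Prod>j\<in>A - I. rr lam \<sigma> V j) =
         (if W \<inter> I = V \<inter> I then lam ^ card I else 0) * (\<Prod>j\<in>A - I. rr lam \<sigma> V j)"
      using prod_ind[of I lam "\<lambda>j. (j \<in> W) = (j \<in> V)"] by simp
  qed
  finally show ?thesis .
qed

definition HH :: "nat \<Rightarrow> real \<Rightarrow> real \<Rightarrow> real \<Rightarrow> nat \<Rightarrow> nat set \<Rightarrow> nat set \<Rightarrow> real" where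
  "HH n q vw vl i V I = (\<Sum>W\<in>winner_sets n q. (if i \<in> W then vw else - vl) * (if W \<inter> I = V \<inter> I then 1 else 0))"

lemma HH_eq: "HH n q vw vl i V I = vw * card {W \<in> winner_sets n q. i \<in> W \<and> W \<inter> I = V \<inter> I}
   - vl * card {W \<in> winner_sets n q. i \<notin> W \<and> W \<inter> I = V \<inter> I}"
proof -
  have "HH n q vw vl i V I = (\<Sum>W\<in>winner_sets n q. (if i \<in> W \<and> W \<inter> I = V \<inter> I then vw else 0)
      + (if i \<notin> W \<and> W \<inter> I = V \<inter> I then - vl else 0))"
    unfolding HH_def by (rule sum.cong) auto
  also have "\<dots> = (\<Sum>W\<in>winner_sets n q. (if i \<in> W \<and> W \<inter> I = V \<inter> I then vw else 0))
      + (\<Sum>W\<in>winner_sets n q. (if i \<notin> W \<and> W \<inter> I = V \<inter> I then - vl else 0))"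
    by (rule sum.distrib)
  also have "\<dots> = (\<Sum>W\<in>{W \<in> winner_sets n q. i \<in> W \<and> W \<inter> I = V \<inter> I}. vw)
      + (\<Sum>W\<in>{W \<in> winner_sets n q. i \<notin> W \<and> W \<inter> I = V \<inter> I}. - vl)"
    by (simp only: sum.inter_filter[OF ws_finite])
  also have "\<dots> = vw * card {W \<in> winner_sets n q. i \<in> W \<and> W \<inter> I = V \<inter> I}
   - vl * card {W \<in> winner_sets n q. i \<notin> W \<and> W \<inter> I = V \<inter> I}"
    by (simp only: sum_constant) (simp add: algebra_simps)
  finally show ?thesis .
qed

lemma HH_pos:
  assumes "i < n" "I \<subseteq> {..<n} - {i}" "V \<subseteq> {..<n} - {i}" "card V = (n - 1) div 2"
    "(n - 1) div 2 < num_winners n q" "num_winners n q \<le> n"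
    "vl * (real n - real (num_winners n q)) < vw * (real (num_winners n q) - real ((n - 1) div 2))"
    "0 < vw" "0 < vl"
  shows "HH n q vw vl i V I \<ge> 0 \<and> ({W \<in> winner_sets n q. i \<in> W \<and> W \<inter> I = V \<inter> I} \<noteq> {} \<longrightarrow> HH n q vw vl i V I > 0)"
proof -
  define K where "K = num_winners n q"
  define m where "m = (n - 1) div 2"
  define t where "t = card (V \<inter> I)"
  define M where "M = card ({..<n} - {i} - I)"
  define k where "k = K - 1 - t"
  have fV: "finite V" using assms(3) by (auto intro: finite_subset)
  have tm: "t \<le> m" unfolding t_def m_def using assms(4) card_mono[OF fV, of "V \<inter> I"] by auto
  have tI: "t \<le> card I" unfolding t_def using assms(2) by (intro card_mono) (auto intro: finite_subset)
  have cS: "card ({..<n} - {i}) = n - 1" using assms(1) by simp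
  have "card ({..<n} - {i} - I) = card ({..<n} - {i}) - card I"
    using assms(2) by (intro card_Diff_subset) (auto intro: finite_subset)
  then have MI: "M = n - 1 - card I" unfolding M_def using cS by simp
  have mK: "m < K" "K \<le> n" using assms(5,6) unfolding m_def K_def by auto
  have Kt: "K - t = Suc k" unfolding k_def using tm mK by auto
  have cin: "card {W \<in> winner_sets n q. i \<in> W \<and> W \<inter> I = V \<inter> I} = M choose k"
    unfolding M_def k_def K_def t_def using cnt_in[OF assms(1,2), of V q] tm mK unfolding t_def K_def by auto
  have cout: "card {W \<in> winner_sets n q. i \<notin> W \<and> W \<inter> I = V \<inter> I} = M choose Suc k"
    using cnt_out[OF assms(1,2), of V q] tm mK Kt unfolding M_def t_def K_def by auto
  have id: "real (Suc k) * real (M choose Suc k) = real (M - k) * real (M choose k)"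
    using binom_step[of k M] by (metis of_nat_mult)
  have Mk: "M - k \<le> n - K" unfolding MI k_def using tm mK tI by auto
  have k1: "K - m \<le> Suc k" unfolding k_def using tm mK by auto
  have "real (M - k) \<le> real n - real K" using Mk mK by auto
  then have A: "vl * real (M - k) \<le> vl * (real n - real K)" using assms(9) by (intro mult_left_mono) auto
  have "real K - real m \<le> real (Suc k)" using k1 mK by auto
  then have B: "vw * (real K - real m) \<le> vw * real (Suc k)" using assms(8) by (intro mult_left_mono) auto
  have pos: "vw * real (Suc k) - vl * real (M - k) > 0" using A B assms(7) unfolding K_def m_def by linarith
  have "real (Suc k) * HH n q vw vl i V I = real (M choose k) * (vw * real (Suc k) - vl * real (M - k))"
    unfolding HH_eq cin cout using id by (simp add: algebra_simps)
  then have eq: "HH n q vw vl i V I = real (M choose k) * (vw * real (Suc k) - vl * real (M - k)) / real (Suc k)"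
    by (simp add: field_simps)
  show ?thesis
  proof
    show "HH n q vw vl i V I \<ge> 0" unfolding eq using pos by simp
    show "{W \<in> winner_sets n q. i \<in> W \<and> W \<inter> I = V \<inter> I} \<noteq> {} \<longrightarrow> HH n q vw vl i V I > 0"
    proof
      assume "{W \<in> winner_sets n q. i \<in> W \<and> W \<inter> I = V \<inter> I} \<noteq> {}"
      then have "card {W \<in> winner_sets n q. i \<in> W \<and> W \<inter> I = V \<inter> I} > 0"
        using ws_finite by (simp add: card_gt_0_iff)
      then have "M choose k > 0" using cin by simp
      then show "HH n q vw vl i V I > 0" unfolding eq using pos by simp
    qed
  qed
qed

lemma E_eq:
  assumes "finite S" "\<forall>j\<in>S. \<sigma> j WinSig = 1 \<and> \<sigma> j LoseSig = 0"
  shows "(\<Sum>W\<in>winner_sets n q. (if i \<in> W then vw else - vl) * prob_votes lam \<sigma> W S V)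
    = (\<Sum>I\<in>Pow S. lam ^ card I * (\<Prod>j\<in>S - I. rr lam \<sigma> V j) * HH n q vw vl i V I)"
proof -
  have "(\<Sum>W\<in>winner_sets n q. (if i \<in> W then vw else - vl) * prob_votes lam \<sigma> W S V)
     = (\<Sum>W\<in>winner_sets n q. \<Sum>I\<in>Pow S. (if i \<in> W then vw else - vl) *
          ((if W \<inter> I = V \<inter> I then lam ^ card I else 0) * (\<Prod>j\<in>S - I. rr lam \<sigma> V j)))"
    by (simp add: decomp[OF assms] sum_distrib_left)
  also have "\<dots> = (\<Sum>I\<in>Pow S. \<Sum>W\<in>winner_sets n q. (if i \<in> W then vw else - vl) *
          ((if W \<inter> I = V \<inter> I then lam ^ card I else 0) * (\<Prod>j\<in>S - I. rr lam \<sigma> V j)))"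
    by (rule sum.swap)
  also have "\<dots> = (\<Sum>I\<in>Pow S. lam ^ card I * (\<Prod>j\<in>S - I. rr lam \<sigma> V j) * HH n q vw vl i V I)"
    unfolding HH_def sum_distrib_left
    by (intro sum.cong refl) auto
  finally show ?thesis .
qed

lemma rr_nonneg: "0 \<le> lam \<Longrightarrow> lam \<le> 1 \<Longrightarrow> 0 \<le> \<sigma> j NoSig \<Longrightarrow> \<sigma> j NoSig \<le> 1 \<Longrightarrow> 0 \<le> rr lam \<sigma> V j"
  unfolding rr_def by auto

lemma Dg_pos:
  assumes "0 < lam" "lam < 1" "valid_profile n \<sigma>" "undominated n \<sigma>" "i < n"
    "W0 \<in> winner_sets n q" "i \<in> W0" "V0 \<subseteq> {..<n} - {i}" "card V0 = (n - 1) div 2"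
    "prob_votes lam \<sigma> W0 ({..<n} - {i}) V0 > 0"
    "(n - 1) div 2 < num_winners n q" "num_winners n q \<le> n"
    "vl * (real n - real (num_winners n q)) < vw * (real (num_winners n q) - real ((n - 1) div 2))"
    "0 < vw" "0 < vl"
  shows "Dg n q lam vw vl \<sigma> i (winner_sets n q) > 0"
proof -
  define S where "S = {..<n} - {i}"
  define Vm where "Vm = {V\<in>Pow S. card V = (n - 1) div 2}"
  define E where "E V = (\<Sum>W\<in>winner_sets n q. (if i \<in> W then vw else - vl) * prob_votes lam \<sigma> W S V)" for V
  have fS: "finite S" unfolding S_def by simp
  have und: "\<forall>j\<in>S. \<sigma> j WinSig = 1 \<and> \<sigma> j LoseSig = 0" using assms(4) unfolding S_def undominated_def by auto
  have val: "\<forall>j\<in>S. 0 \<le> \<sigma> j NoSig \<and> \<sigma> j NoSig \<le> 1" using assms(3) unfolding S_def valid_profile_def by auto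
  have Rnn: "0 \<le> (\<Prod>j\<in>S - I. rr lam \<sigma> V j)" for I V
    using val assms(1,2) by (intro prod_nonneg rr_nonneg) auto
  have Enn: "E V \<ge> 0" if "V \<in> Vm" for V
  proof -
    have "E V = (\<Sum>I\<in>Pow S. lam ^ card I * (\<Prod>j\<in>S - I. rr lam \<sigma> V j) * HH n q vw vl i V I)"
      unfolding E_def by (rule E_eq[OF fS und])
    also have "\<dots> \<ge> 0"
    proof (rule sum_nonneg)
      fix I assume "I \<in> Pow S"
      then have "HH n q vw vl i V I \<ge> 0" using HH_pos[OF assms(5), where I=I and V=V and q=q and vw=vw and vl=vl] that assms(11-15)
        unfolding Vm_def S_def by auto
      then show "0 \<le> lam ^ card I * (\<Prod>j\<in>S - I. rr lam \<sigma> V j) * HH n q vw vl i V I"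
        using Rnn assms(1) by simp
    qed
    finally show ?thesis .
  qed
  have E0: "E V0 > 0"
  proof -
    have "prob_votes lam \<sigma> W0 S V0 = (\<Sum>I\<in>Pow S. (if W0 \<inter> I = V0 \<inter> I then lam ^ card I else 0) * (\<Prod>j\<in>S - I. rr lam \<sigma> V0 j))"
      by (rule decomp[OF fS und])
    then have "(\<Sum>I\<in>Pow S. (if W0 \<inter> I = V0 \<inter> I then lam ^ card I else 0) * (\<Prod>j\<in>S - I. rr lam \<sigma> V0 j)) > 0"
      using assms(10) unfolding S_def by simp
    then obtain I where I: "I \<in> Pow S" "(if W0 \<inter> I = V0 \<inter> I then lam ^ card I else 0) * (\<Prod>j\<in>S - I. rr lam \<sigma> V0 j) > 0"
      by (metis (no_types, lifting) not_less sum_nonpos)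
    then have WI: "W0 \<inter> I = V0 \<inter> I" by (auto split: if_splits)
    have Rp: "(\<Prod>j\<in>S - I. rr lam \<sigma> V0 j) > 0" using I(2) Rnn[of V0 I] WI assms(1)
      by (auto simp: zero_less_mult_iff)
    have "W0 \<in> {W \<in> winner_sets n q. i \<in> W \<and> W \<inter> I = V0 \<inter> I}" using assms(6,7) WI by auto
    then have Hp: "HH n q vw vl i V0 I > 0" using HH_pos[OF assms(5), where I=I and V=V0 and q=q and vw=vw and vl=vl] I(1) assms(8,9,11-15)
      unfolding S_def by blast
    have tp: "lam ^ card I * (\<Prod>j\<in>S - I. rr lam \<sigma> V0 j) * HH n q vw vl i V0 I > 0"
      using Hp Rp assms(1) by simp
    have V0m: "V0 \<in> Vm" using assms(8,9) unfolding Vm_def S_def by auto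
    have "E V0 = (\<Sum>I\<in>Pow S. lam ^ card I * (\<Prod>j\<in>S - I. rr lam \<sigma> V0 j) * HH n q vw vl i V0 I)"
      unfolding E_def by (rule E_eq[OF fS und])
    also have "\<dots> \<ge> lam ^ card I * (\<Prod>j\<in>S - I. rr lam \<sigma> V0 j) * HH n q vw vl i V0 I"
    proof (rule member_le_sum[OF I(1)])
      fix I' assume "I' \<in> Pow S - {I}"
      then have "HH n q vw vl i V0 I' \<ge> 0" using HH_pos[OF assms(5), where I=I' and V=V0 and q=q and vw=vw and vl=vl] assms(8,9,11-15)
        unfolding S_def by auto
      then show "0 \<le> lam ^ card I' * (\<Prod>j\<in>S - I'. rr lam \<sigma> V0 j) * HH n q vw vl i V0 I'"
        using Rnn assms(1) by simp
    qed (use fS in simp)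
    finally show ?thesis using tp by linarith
  qed
  have "Dg n q lam vw vl \<sigma> i (winner_sets n q) = (\<Sum>W\<in>winner_sets n q. \<Sum>V\<in>Vm. (if i \<in> W then vw else - vl) * prob_votes lam \<sigma> W S V)"
    unfolding Dg_eq Vm_def S_def by (simp add: sum_distrib_left)
  also have "\<dots> = (\<Sum>V\<in>Vm. E V)" unfolding E_def by (rule sum.swap)
  also have "\<dots> \<ge> E V0"
  proof (rule member_le_sum)
    show "V0 \<in> Vm" using assms(8,9) unfolding Vm_def S_def by auto
    show "finite Vm" unfolding Vm_def using fS by simp
  qed (use Enn in auto)
  finally show ?thesis using E0 by linarith
qed

lemma ws_card_pos: "num_winners n q \<le> n \<Longrightarrow> card (winner_sets n q) > 0"
proof -
  assume "num_winners n q \<le> n"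
  have "card (winner_sets n q) = card {B. B \<subseteq> {..<n} \<and> card B = num_winners n q}"
    unfolding winner_sets_def by simp
  also have "\<dots> = n choose num_winners n q" by (subst n_subsets) auto
  finally show ?thesis using \<open>num_winners n q \<le> n\<close> by simp
qed

lemma vp_bounds:
  assumes "valid_profile n \<sigma>" "undominated n \<sigma>" "j < n" "0 < lam" "lam < 1"
  shows "0 \<le> vote_prob lam \<sigma> j w" "vote_prob lam \<sigma> j w \<le> 1"
    "vote_prob lam \<sigma> j True > 0" "vote_prob lam \<sigma> j False < 1"
proof -
  have s: "0 \<le> \<sigma> j NoSig" "\<sigma> j NoSig \<le> 1" "\<sigma> j WinSig = 1" "\<sigma> j LoseSig = 0"
    using assms(1-3) unfolding valid_profile_def undominated_def by auto
  define t where "t = (1 - lam) * \<sigma> j NoSig"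
  have a: "t \<ge> 0" using s assms(5) unfolding t_def by simp
  have b: "t \<le> 1 - lam" using s assms(5) mult_left_mono[of "\<sigma> j NoSig" 1 "1 - lam"] unfolding t_def by simp
  have e1: "vote_prob lam \<sigma> j True = lam + t" and e0: "vote_prob lam \<sigma> j False = t"
    unfolding vote_prob_def t_def using s by simp_all
  show "0 \<le> vote_prob lam \<sigma> j w" "vote_prob lam \<sigma> j w \<le> 1"
    "vote_prob lam \<sigma> j True > 0" "vote_prob lam \<sigma> j False < 1"
    using e1 e0 a b assms(4,5) by (cases w; simp)+
qed

lemma factor_nonneg:
  assumes "valid_profile n \<sigma>" "undominated n \<sigma>" "j < n" "0 < lam" "lam < 1"
  shows "0 \<le> (if j \<in> V then vote_prob lam \<sigma> j (j \<in> W) else 1 - vote_prob lam \<sigma> j (j \<in> W))"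
  using vp_bounds(1,2)[OF assms, of "j \<in> W"] by auto

lemma factor_pos_inf:
  assumes "valid_profile n \<sigma>" "undominated n \<sigma>" "j < n" "0 < lam" "lam < 1"
  shows "0 < (if j \<in> W then vote_prob lam \<sigma> j (j \<in> W) else 1 - vote_prob lam \<sigma> j (j \<in> W))"
  using vp_bounds[OF assms] by auto

lemma prob_nonneg:
  assumes "valid_profile n \<sigma>" "undominated n \<sigma>" "A \<subseteq> {..<n}" "0 < lam" "lam < 1"
  shows "0 \<le> prob_votes lam \<sigma> W A V"
  unfolding prob_votes_def using assms by (intro prod_nonneg factor_nonneg[OF assms(1,2)]) auto

lemma part2:
  assumes "1/2 \<le> q" "q < 1" "0 < vw" "0 < vl" "vl / vw \<le> (q - 1/2) / (1 - q)"
    "odd n" "0 < lam" "lam < 1" "is_equilibrium n q lam vw vl \<sigma>"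
  shows "win_prob n q lam \<sigma> = 1"
proof (rule ccontr)
  assume ne: "win_prob n q lam \<sigma> \<noteq> 1"
  define K where "K = num_winners n q"
  define m where "m = (n - 1) div 2"
  have mK: "m < K" "K \<le> n" using K_gt[OF assms(1,6)] K_le[of q n] assms(1,2) unfolding K_def m_def by auto
  have val: "valid_profile n \<sigma>" and und: "undominated n \<sigma>" using assms(9) unfolding is_equilibrium_def by auto
  have cpos: "card (winner_sets n q) > 0" using ws_card_pos mK unfolding K_def by auto
  have ineq: "vl * (real n - real K) < vw * (real K - real m)"
  proof -
    have q1: "1 - q > 0" using assms(2) by simp
    have "vl / vw * (1 - q) \<le> (q - 1/2)" using assms(5) q1 by (simp add: le_divide_eq)
    then have "vl * (1 - q) \<le> vw * (q - 1/2)" using assms(3) by (simp add: field_simps)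
    then have A: "vl * (1 - q) * real n \<le> vw * (q - 1/2) * real n" by (intro mult_right_mono) auto
    have "q * real n \<le> of_int \<lceil>q * real n\<rceil>" by (rule le_of_int_ceiling)
    moreover have "0 \<le> q * real n" using assms(1) by simp
    then have "\<lceil>q * real n\<rceil> \<ge> 0" by simp
    ultimately have Kq: "q * real n \<le> real K" unfolding K_def num_winners_def by simp
    obtain j where j: "n = 2*j+1" using assms(6) oddE by blast
    have mr: "real m = (real n - 1) / 2" unfolding m_def j by simp
    have B: "vl * (real n - real K) \<le> vl * (real n - q * real n)" using Kq assms(4) by (intro mult_left_mono) auto
    have C: "vw * (q * real n - real n / 2) < vw * (real K - real m)" using Kq assms(3) mr by (intro mult_strict_left_mono) auto
    show ?thesis using A B C by (simp add: algebra_simps)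
  qed
  obtain W0 V0 where W0: "W0 \<in> winner_sets n q" and V0: "V0 \<subseteq> {..<n}" "card V0 \<le> m"
    and pV0: "prob_votes lam \<sigma> W0 {..<n} V0 \<noteq> 0"
  proof (rule ccontr)
    assume "\<not> thesis"
    then have z: "\<And>W V. W \<in> winner_sets n q \<Longrightarrow> V \<subseteq> {..<n} \<Longrightarrow> card V \<le> m \<Longrightarrow> prob_votes lam \<sigma> W {..<n} V = 0"
      using that by blast
    have "(\<Sum>V\<in>Pow {..<n}. if pstar_wins n V then prob_votes lam \<sigma> W {..<n} V else 0) = 1"
      if "W \<in> winner_sets n q" for W
    proof -
      have "(\<Sum>V\<in>Pow {..<n}. if pstar_wins n V then prob_votes lam \<sigma> W {..<n} V else 0)
          = (\<Sum>V\<in>Pow {..<n}. prob_votes lam \<sigma> W {..<n} V)"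
        by (rule sum.cong[OF refl]) (use z[OF that] in \<open>auto simp: pstar_wins_def m_def\<close>)
      also have "\<dots> = 1" unfolding prob_votes_def by (rule prob_sum_one) simp
      finally show ?thesis .
    qed
    then have "win_prob n q lam \<sigma> = real (card (winner_sets n q)) / real (card (winner_sets n q))"
      unfolding win_prob_def by simp
    then show False using ne cpos by simp
  qed
  have fac: "\<forall>j\<in>{..<n}. 0 < (if j \<in> V0 then vote_prob lam \<sigma> j (j \<in> W0) else 1 - vote_prob lam \<sigma> j (j \<in> W0))"
  proof
    fix j assume j: "j \<in> {..<n}"
    have "(if j \<in> V0 then vote_prob lam \<sigma> j (j \<in> W0) else 1 - vote_prob lam \<sigma> j (j \<in> W0)) \<noteq> 0"
      using pV0 j unfolding prob_votes_def by auto
    then show "0 < (if j \<in> V0 then vote_prob lam \<sigma> j (j \<in> W0) else 1 - vote_prob lam \<sigma> j (j \<in> W0))"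
      using factor_nonneg[OF val und _ assms(7,8), of j V0 W0] j by auto
  qed
  obtain i where i: "i \<in> W0" "i \<notin> V0"
  proof (rule ccontr)
    assume "\<not> thesis"
    then have "W0 \<subseteq> V0" using that by blast
    then have "card W0 \<le> card V0" using V0(1) by (intro card_mono) (auto intro: finite_subset)
    then show False using ws_card[OF W0] V0(2) mK unfolding K_def by simp
  qed
  have iN: "i < n" using i W0 ws_sub by blast
  have si: "\<sigma> i NoSig < 1"
  proof -
    have "0 < 1 - vote_prob lam \<sigma> i True" using bspec[OF fac, of i] iN i by simp
    then have "0 < (1 - lam) * (1 - \<sigma> i NoSig)" using und iN unfolding vote_prob_def undominated_def
      by (auto simp: algebra_simps)
    then show ?thesis using assms(8) by (simp add: zero_less_mult_iff)
  qed
  define S where "S = {..<n} - {i}"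
  define Vx where "Vx X = (V0 - X) \<union> (W0 \<inter> X)" for X
  have fS: "finite S" unfolding S_def by simp
  have V0S: "V0 \<subseteq> S" using V0 i unfolding S_def by auto
  have posX: "prob_votes lam \<sigma> W0 S (Vx X) > 0" for X
    unfolding prob_votes_def
  proof (rule prod_pos)
    fix j assume j: "j \<in> S"
    show "0 < (if j \<in> Vx X then vote_prob lam \<sigma> j (j \<in> W0) else 1 - vote_prob lam \<sigma> j (j \<in> W0))"
    proof (cases "j \<in> X")
      case True
      then have "(j \<in> Vx X) = (j \<in> W0)" unfolding Vx_def by auto
      then show ?thesis using factor_pos_inf[OF val und _ assms(7,8), of j W0] j unfolding S_def by auto
    next
      case False
      then have "(j \<in> Vx X) = (j \<in> V0)" unfolding Vx_def by auto
      then show ?thesis using fac j unfolding S_def by auto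
    qed
  qed
  have "\<exists>Y\<subseteq>S. card (Vx Y) = m"
  proof (rule ivt_sets[OF fS])
    show "\<forall>Y x. Y \<subseteq> S \<and> x \<in> S \<longrightarrow> card (Vx (insert x Y)) \<le> card (Vx Y) + 1"
    proof (intro allI impI)
      fix Y x assume "Y \<subseteq> S \<and> x \<in> S"
      have fin: "finite (Vx Y)" using V0(1) W0 unfolding Vx_def by (auto intro: finite_subset dest: ws_sub)
      have "Vx (insert x Y) \<subseteq> insert x (Vx Y)" unfolding Vx_def by auto
      then have "card (Vx (insert x Y)) \<le> card (insert x (Vx Y))" using fin by (intro card_mono) auto
      also have "\<dots> \<le> card (Vx Y) + 1" using fin by (simp add: card_insert_if)
      finally show "card (Vx (insert x Y)) \<le> card (Vx Y) + 1" .
    qed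
    show "card (Vx {}) \<le> m" using V0 unfolding Vx_def by simp
    have "Vx S = W0 \<inter> S" using V0S unfolding Vx_def by auto
    also have "\<dots> = W0 - {i}" using W0 unfolding S_def by (auto dest: ws_sub)
    finally have "card (Vx S) = K - 1" using ws_card[OF W0] i W0 unfolding K_def
      by (simp add: card_Diff_singleton_if)
    then show "m \<le> card (Vx S)" using mK by simp
  qed
  then obtain Y where Y: "Y \<subseteq> S" "card (Vx Y) = m" by blast
  have VxS: "Vx Y \<subseteq> S" using V0S Y W0 unfolding Vx_def by auto
  have Dp: "Dg n q lam vw vl \<sigma> i (winner_sets n q) > 0"
    using Dg_pos[OF assms(7,8) val und iN W0 i(1), of "Vx Y" vl vw] VxS Y posX[of Y] mK ineq assms(3,4)
    unfolding S_def K_def m_def by auto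
  have cs: "cond_sets n q i NoSig = winner_sets n q" unfolding cond_sets_def by simp
  have "interim_payoff n q lam vw vl \<sigma> i NoSig 1 \<le> interim_payoff n q lam vw vl \<sigma> i NoSig (\<sigma> i NoSig)"
  proof -
    have "winner_sets n q \<noteq> {}" using cpos by auto
    then have "\<forall>x\<in>{0..1}. interim_payoff n q lam vw vl \<sigma> i NoSig x \<le> interim_payoff n q lam vw vl \<sigma> i NoSig (\<sigma> i NoSig)"
      using assms(9) iN cs unfolding is_equilibrium_def by auto
    then show ?thesis by simp
  qed
  then have "1 * Dg n q lam vw vl \<sigma> i (winner_sets n q) / real (card (winner_sets n q))
     \<le> \<sigma> i NoSig * Dg n q lam vw vl \<sigma> i (winner_sets n q) / real (card (winner_sets n q))"
    using interim_affine[of n q lam vw vl \<sigma> i NoSig] cs by (metis add_le_cancel_left)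
  then have "1 * Dg n q lam vw vl \<sigma> i (winner_sets n q) \<le> \<sigma> i NoSig * Dg n q lam vw vl \<sigma> i (winner_sets n q)"
    using cpos by (simp add: divide_right_mono_neg divide_le_cancel)
  then show False using Dp si by (simp add: mult_le_cancel_right)
qed

definition sig0 :: "nat \<Rightarrow> signal \<Rightarrow> real" where
  "sig0 i s = (case s of WinSig \<Rightarrow> 1 | _ \<Rightarrow> 0)"

lemma vp0: "vote_prob lam sig0 j w = (if w then lam else 0)"
  unfolding vote_prob_def sig0_def by simp

lemma prob0:
  assumes "finite A" "V \<subseteq> A"
  shows "prob_votes lam sig0 W A V = (if V \<subseteq> W then lam ^ card V * (1 - lam) ^ card (A \<inter> W - V) else 0)"
proof -
  have fV: "finite V" using assms by (auto intro: finite_subset)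
  have "prob_votes lam sig0 W A V = (\<Prod>j\<in>V. lam * (if j \<in> W then 1 else 0)) * (\<Prod>j\<in>A - V. (if j \<in> W then 1 - lam else 1))"
  proof -
    have "prob_votes lam sig0 W A V = (\<Prod>j\<in>V. vote_prob lam sig0 j (j \<in> W)) * (\<Prod>j\<in>A - V. 1 - vote_prob lam sig0 j (j \<in> W))"
      unfolding prob_votes_def by (rule prod_if_split[OF assms])
    moreover have "(\<Prod>j\<in>V. vote_prob lam sig0 j (j \<in> W)) = (\<Prod>j\<in>V. lam * (if j \<in> W then 1 else 0))"
      by (rule prod.cong) (auto simp: vp0)
    moreover have "(\<Prod>j\<in>A - V. 1 - vote_prob lam sig0 j (j \<in> W)) = (\<Prod>j\<in>A - V. (if j \<in> W then 1 - lam else 1))"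
      by (rule prod.cong) (auto simp: vp0)
    ultimately show ?thesis by simp
  qed
  also have "(\<Prod>j\<in>V. lam * (if j \<in> W then 1 else 0)) = (if V \<subseteq> W then lam ^ card V else 0)"
    using prod_ind[OF fV, of lam "\<lambda>j. j \<in> W"] by auto
  also have "(\<Prod>j\<in>A - V. (if j \<in> W then 1 - lam else 1)) = (\<Prod>j\<in>(A - V) \<inter> {j. j \<in> W}. 1 - lam) * (\<Prod>j\<in>(A - V) \<inter> - {j. j \<in> W}. 1)"
    using assms(1) by (intro prod.If_cases) simp
  also have "\<dots> = (1 - lam) ^ card (A \<inter> W - V)"
  proof -
    have "(A - V) \<inter> {j. j \<in> W} = A \<inter> W - V" by auto
    then show ?thesis by simp
  qed
  finally show ?thesis by simp
qed

lemma piv0: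
  assumes "finite A"
  shows "(\<Sum>V\<in>{V\<in>Pow A. card V = m}. prob_votes lam sig0 W A V)
     = real (card (A \<inter> W) choose m) * (lam ^ m * (1 - lam) ^ (card (A \<inter> W) - m))"
proof -
  have "(\<Sum>V\<in>{V\<in>Pow A. card V = m}. prob_votes lam sig0 W A V)
      = (\<Sum>V\<in>{V\<in>Pow A. card V = m}. if V \<subseteq> W then lam ^ card V * (1 - lam) ^ card (A \<inter> W - V) else 0)"
    by (rule sum.cong[OF refl]) (use prob0[OF assms] in auto)
  also have "\<dots> = (\<Sum>V\<in>{V\<in>{V\<in>Pow A. card V = m}. V \<subseteq> W}. lam ^ card V * (1 - lam) ^ card (A \<inter> W - V))"
    by (rule sum.inter_filter[symmetric]) (use assms in simp)
  also have "{V\<in>{V\<in>Pow A. card V = m}. V \<subseteq> W} = {V. V \<subseteq> A \<inter> W \<and> card V = m}" by auto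
  also have "(\<Sum>V\<in>{V. V \<subseteq> A \<inter> W \<and> card V = m}. lam ^ card V * (1 - lam) ^ card (A \<inter> W - V))
     = (\<Sum>V\<in>{V. V \<subseteq> A \<inter> W \<and> card V = m}. lam ^ m * (1 - lam) ^ (card (A \<inter> W) - m))"
  proof (rule sum.cong[OF refl])
    fix V assume "V \<in> {V. V \<subseteq> A \<inter> W \<and> card V = m}"
    then have "V \<subseteq> A \<inter> W" "card V = m" by auto
    moreover have "finite V" using \<open>V \<subseteq> A \<inter> W\<close> assms by (auto intro: finite_subset)
    ultimately have "card (A \<inter> W - V) = card (A \<inter> W) - m" by (simp add: card_Diff_subset)
    then show "lam ^ card V * (1 - lam) ^ card (A \<inter> W - V) = lam ^ m * (1 - lam) ^ (card (A \<inter> W) - m)"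
      using \<open>card V = m\<close> by simp
  qed
  also have "\<dots> = real (card {V. V \<subseteq> A \<inter> W \<and> card V = m}) * (lam ^ m * (1 - lam) ^ (card (A \<inter> W) - m))"
    by (simp only: sum_constant)
  also have "card {V. V \<subseteq> A \<inter> W \<and> card V = m} = card (A \<inter> W) choose m"
    by (rule n_subsets) (use assms in simp)
  finally show ?thesis .
qed

definition g0 :: "real \<Rightarrow> nat \<Rightarrow> nat \<Rightarrow> real" where
  "g0 lam m k = real (k choose m) * (lam ^ m * (1 - lam) ^ (k - m))"

lemma Dg0:
  assumes "C \<subseteq> winner_sets n q" "i < n"
  shows "Dg n q lam vw vl sig0 i C = (\<Sum>W\<in>C. if i \<in> W then vw * g0 lam ((n - 1) div 2) (num_winners n q - 1)
       else - vl * g0 lam ((n - 1) div 2) (num_winners n q))"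
  unfolding Dg_eq
proof (rule sum.cong[OF refl])
  fix W assume W: "W \<in> C"
  then have Wws: "W \<in> winner_sets n q" using assms by auto
  have eq: "({..<n} - {i}) \<inter> W = W - {i}" using ws_sub[OF Wws] by auto
  have c: "card (({..<n} - {i}) \<inter> W) = (if i \<in> W then num_winners n q - 1 else num_winners n q)"
    unfolding eq using ws_card[OF Wws] by (simp add: card_Diff_singleton_if)
  show "(if i \<in> W then vw else - vl) * (\<Sum>V\<in>{V \<in> Pow ({..<n} - {i}). card V = (n - 1) div 2}. prob_votes lam sig0 W ({..<n} - {i}) V)
     = (if i \<in> W then vw * g0 lam ((n - 1) div 2) (num_winners n q - 1) else - vl * g0 lam ((n - 1) div 2) (num_winners n q))"
  proof -
    have p: "(\<Sum>V\<in>{V \<in> Pow ({..<n} - {i}). card V = (n - 1) div 2}. prob_votes lam sig0 W ({..<n} - {i}) V)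
       = g0 lam ((n - 1) div 2) (card (({..<n} - {i}) \<inter> W))"
      unfolding g0_def by (rule piv0) simp
    show ?thesis unfolding p c by simp
  qed
qed

lemma neg_alg:
  fixes Kr Km NK a b c d L P vw vl lam :: real
  assumes "Kr * b = NK * a" "Km * d = Kr * c" "Kr > 0" "Km > 0" "a > 0" "c > 0" "L > 0" "P > 0"
    "vw * Km < vl * (1 - lam) * NK"
  shows "a * (vw * (c * (L * P))) + b * (- vl * (d * (L * (P * (1 - lam))))) < 0"
proof -
  have "Kr * Km * (a * (vw * (c * (L * P))) + b * (- vl * (d * (L * (P * (1 - lam))))))
      = a * c * L * P * Kr * vw * Km - (Kr * b) * (Km * d) * vl * L * P * (1 - lam)"
    by (simp add: algebra_simps)
  also have "\<dots> = a * c * L * P * Kr * (vw * Km - vl * (1 - lam) * NK)"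
    unfolding assms(1,2) by (simp add: algebra_simps)
  finally have eq: "Kr * Km * (a * (vw * (c * (L * P))) + b * (- vl * (d * (L * (P * (1 - lam)))))) =
     a * c * L * P * Kr * (vw * Km - vl * (1 - lam) * NK)" .
  have "a * c * L * P * Kr > 0" using assms by simp
  moreover have "vw * Km - vl * (1 - lam) * NK < 0" using assms(9) by simp
  ultimately have "Kr * Km * (a * (vw * (c * (L * P))) + b * (- vl * (d * (L * (P * (1 - lam)))))) < 0"
    unfolding eq by (simp add: mult_pos_neg)
  moreover have "Kr * Km > 0" using assms by simp
  ultimately show ?thesis
    by (smt (verit, best) mult_nonneg_nonneg)
qed

lemma win0_bound:
  assumes "0 \<le> lam" "lam \<le> 1" "num_winners n q \<le> n"
  shows "win_prob n q lam sig0 \<le> 2 ^ n * lam ^ ((n - 1) div 2 + 1)"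
proof -
  define m where "m = (n - 1) div 2"
  have each: "(\<Sum>V\<in>Pow {..<n}. if pstar_wins n V then prob_votes lam sig0 W {..<n} V else 0) \<le> 2 ^ n * lam ^ (m + 1)"
    if W: "W \<in> winner_sets n q" for W
  proof -
    have "(\<Sum>V\<in>Pow {..<n}. if pstar_wins n V then prob_votes lam sig0 W {..<n} V else 0)
        \<le> (\<Sum>V\<in>Pow {..<n}. if V \<subseteq> W then lam ^ (m + 1) else 0)"
    proof (rule sum_mono)
      fix V assume V: "V \<in> Pow {..<n}"
      have p: "prob_votes lam sig0 W {..<n} V = (if V \<subseteq> W then lam ^ card V * (1 - lam) ^ card ({..<n} \<inter> W - V) else 0)"
        using V by (intro prob0) auto
      show "(if pstar_wins n V then prob_votes lam sig0 W {..<n} V else 0) \<le> (if V \<subseteq> W then lam ^ (m + 1) else 0)"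
      proof (cases "pstar_wins n V \<and> V \<subseteq> W")
        case True
        then have "m + 1 \<le> card V" unfolding pstar_wins_def m_def by auto
        then have "lam ^ card V \<le> lam ^ (m + 1)" by (rule power_decreasing) (use assms in auto)
        moreover have "(1 - lam) ^ card ({..<n} \<inter> W - V) \<le> 1" using assms(1,2) by (intro power_le_one) auto
        moreover have "0 \<le> lam ^ card V" using assms(1) by simp
        ultimately have "lam ^ card V * (1 - lam) ^ card ({..<n} \<inter> W - V) \<le> lam ^ (m + 1)"
          using mult_left_mono[of "(1 - lam) ^ card ({..<n} \<inter> W - V)" 1 "lam ^ card V"] by simp
        then show ?thesis using True p by simp
      next
        case False
        then show ?thesis using p assms(1) by auto
      qed
    qed
    also have "\<dots> = (\<Sum>V\<in>{V \<in> Pow {..<n}. V \<subseteq> W}. lam ^ (m + 1))"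
      by (rule sum.inter_filter[symmetric]) simp
    also have "{V \<in> Pow {..<n}. V \<subseteq> W} = Pow W" using ws_sub[OF W] by auto
    also have "(\<Sum>V\<in>Pow W. lam ^ (m + 1)) = 2 ^ card W * lam ^ (m + 1)"
    proof -
      have "finite W" using ws_sub[OF W] by (auto intro: finite_subset)
      then show ?thesis by (simp add: card_Pow)
    qed
    also have "\<dots> \<le> 2 ^ n * lam ^ (m + 1)"
      using ws_card[OF W] assms by (intro mult_right_mono) auto
    finally show ?thesis .
  qed
  have cpos: "card (winner_sets n q) > 0" using ws_card_pos assms(3) by auto
  have "win_prob n q lam sig0 \<le> (\<Sum>W\<in>winner_sets n q. 2 ^ n * lam ^ (m + 1)) / real (card (winner_sets n q))"
    unfolding win_prob_def using cpos by (intro divide_right_mono sum_mono each) auto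
  also have "\<dots> = 2 ^ n * lam ^ (m + 1)" using cpos by simp
  finally show ?thesis unfolding m_def .
qed

lemma g0_pos: "0 < lam \<Longrightarrow> lam < 1 \<Longrightarrow> m \<le> k \<Longrightarrow> g0 lam m k > 0"
  unfolding g0_def by simp

lemma strict0:
  assumes "1/2 \<le> q" "q < 1" "0 < vw" "0 < vl" "odd n" "0 < lam" "lam < 1"
    "vw * (real (num_winners n q) - real ((n - 1) div 2)) < vl * (1 - lam) * (real n - real (num_winners n q))"
  shows "is_strict_equilibrium n q lam vw vl sig0"
proof -
  define K where "K = num_winners n q"
  define m where "m = (n - 1) div 2"
  have mK: "m < K" "K \<le> n" using K_gt[OF assms(1,5)] K_le[of q n] assms(1,2) unfolding K_def m_def by auto
  have val: "valid_profile n sig0" unfolding valid_profile_def sig0_def by (auto split: signal.splits)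
  have und: "undominated n sig0" unfolding undominated_def sig0_def by auto
  have br: "\<forall>x\<in>{0..1}. x \<noteq> sig0 i s \<longrightarrow> interim_payoff n q lam vw vl sig0 i s x
                     < interim_payoff n q lam vw vl sig0 i s (sig0 i s)"
    if i: "i < n" and ne: "cond_sets n q i s \<noteq> {}" for i s
  proof -
    define C where "C = cond_sets n q i s"
    have Cs: "C \<subseteq> winner_sets n q" unfolding C_def cond_sets_def by (auto split: signal.splits)
    have cC: "real (card C) > 0" using ne Cs ws_finite unfolding C_def by (auto intro: finite_subset simp: card_gt_0_iff)
    define D where "D = Dg n q lam vw vl sig0 i C"
    have aff: "interim_payoff n q lam vw vl sig0 i s x = interim_payoff n q lam vw vl sig0 i s 0 + x * D / real (card C)" for x
      unfolding D_def C_def by (rule interim_affine)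
    have D_eq: "D = (\<Sum>W\<in>C. if i \<in> W then vw * g0 lam m (K - 1) else - vl * g0 lam m K)"
      unfolding D_def K_def m_def by (rule Dg0[OF Cs i])
    have gK1: "g0 lam m (K - 1) > 0" "g0 lam m K > 0" using g0_pos assms(6,7) mK by auto
    show ?thesis
    proof (cases s)
      case WinSig
      have "D = (\<Sum>W\<in>C. vw * g0 lam m (K - 1))" unfolding D_eq
        by (rule sum.cong[OF refl]) (auto simp: C_def cond_sets_def WinSig)
      then have Dp: "D > 0" using cC assms(3) gK1 by simp
      show ?thesis
      proof (intro ballI impI)
        fix x :: real assume "x \<in> {0..1}" "x \<noteq> sig0 i s"
        then have "x < 1" using WinSig by (auto simp: sig0_def)
        then have "x * D < 1 * D" using Dp by (intro mult_strict_right_mono) auto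
        then have "x * D / real (card C) < 1 * D / real (card C)" using cC by (intro divide_strict_right_mono) auto
        then show "interim_payoff n q lam vw vl sig0 i s x < interim_payoff n q lam vw vl sig0 i s (sig0 i s)"
          unfolding aff[of x] aff[of "sig0 i s"] using WinSig by (simp add: sig0_def)
      qed
    next
      case LoseSig
      have "D = (\<Sum>W\<in>C. - vl * g0 lam m K)" unfolding D_eq
        by (rule sum.cong[OF refl]) (auto simp: C_def cond_sets_def LoseSig)
      then have Dn: "D < 0" using cC assms(4) gK1 by (simp add: mult_pos_neg)
      show ?thesis
      proof (intro ballI impI)
        fix x :: real assume "x \<in> {0..1}" "x \<noteq> sig0 i s"
        then have "x > 0" using LoseSig by (auto simp: sig0_def)
        then have "x * D < 0" using Dn by (simp add: mult_pos_neg)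
        then have "x * D / real (card C) < 0" using cC by (simp add: divide_neg_pos)
        then show "interim_payoff n q lam vw vl sig0 i s x < interim_payoff n q lam vw vl sig0 i s (sig0 i s)"
          unfolding aff[of x] aff[of "sig0 i s"] using LoseSig by (simp add: sig0_def)
      qed
    next
      case NoSig
      have CW: "C = winner_sets n q" unfolding C_def NoSig cond_sets_def by simp
      have "D = (\<Sum>W\<in>winner_sets n q \<inter> {W. i \<in> W}. vw * g0 lam m (K - 1)) + (\<Sum>W\<in>winner_sets n q \<inter> - {W. i \<in> W}. - vl * g0 lam m K)"
        unfolding D_eq CW by (rule sum.If_cases[OF ws_finite])
      also have "\<dots> = real (card {W \<in> winner_sets n q. i \<in> W}) * (vw * g0 lam m (K - 1))
          + real (card {W \<in> winner_sets n q. i \<notin> W}) * (- vl * g0 lam m K)"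
        by (simp add: Int_def Collect_conj_eq[symmetric] set_diff_eq[symmetric] Compl_eq)
      finally have D2: "D = real (card {W \<in> winner_sets n q. i \<in> W}) * (vw * g0 lam m (K - 1))
          + real (card {W \<in> winner_sets n q. i \<notin> W}) * (- vl * g0 lam m K)" .
      have ci: "card {W \<in> winner_sets n q. i \<in> W} = (n - 1) choose (K - 1)"
        using cnt_in[where I="{}" and V="{}" and q=q and n=n and i=i] i mK unfolding K_def by simp
      have co: "card {W \<in> winner_sets n q. i \<notin> W} = (n - 1) choose K"
        using cnt_out[where I="{}" and V="{}" and q=q and n=n and i=i] i mK unfolding K_def by simp
      obtain k where k: "K = Suc k" using mK by (cases K) auto
      have id1: "real K * real ((n - 1) choose K) = real (n - K) * real ((n - 1) choose (K - 1))"
        using binom_step[of k "n - 1"] k by (metis diff_Suc_1 diff_Suc_eq_diff_pred of_nat_mult)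
      have id2: "real (K - m) * real (K choose m) = real K * real ((K - 1) choose m)"
        using binomial_absorb_comp[of K m] by (metis of_nat_mult)
      have pw: "(1 - lam) ^ (K - m) = (1 - lam) ^ (K - 1 - m) * (1 - lam)"
        using mK k by (simp add: Suc_diff_le)
      have Dn: "D < 0"
        unfolding D2 ci co g0_def pw
      proof (rule neg_alg[where Kr="real K" and Km="real (K - m)" and NK="real (n - K)"])
        show "real K * real (n - 1 choose K) = real (n - K) * real (n - 1 choose (K - 1))" by (rule id1)
        show "real (K - m) * real (K choose m) = real K * real (K - 1 choose m)" by (rule id2)
        show "real K > 0" "real (K - m) > 0" using mK by auto
        show "real (n - 1 choose (K - 1)) > 0" "real (K - 1 choose m) > 0" using mK by auto
        show "lam ^ m > 0" "(1 - lam) ^ (K - 1 - m) > 0" using assms(6,7) by auto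
        show "vw * real (K - m) < vl * (1 - lam) * real (n - K)"
          using assms(8) mK unfolding K_def m_def by (simp add: of_nat_diff)
      qed
      show ?thesis
      proof (intro ballI impI)
        fix x :: real assume "x \<in> {0..1}" "x \<noteq> sig0 i s"
        then have "x > 0" using NoSig by (auto simp: sig0_def)
        then have "x * D < 0" using Dn by (simp add: mult_pos_neg)
        then have "x * D / real (card C) < 0" using cC by (simp add: divide_neg_pos)
        then show "interim_payoff n q lam vw vl sig0 i s x < interim_payoff n q lam vw vl sig0 i s (sig0 i s)"
          unfolding aff[of x] aff[of "sig0 i s"] using NoSig by (simp add: sig0_def)
      qed
    qed
  qed
  show ?thesis unfolding is_strict_equilibrium_def using val und br by blast
qed

lemma part1_lam:
  assumes "1/2 \<le> q" "q < 1" "0 < vw" "0 < vl" "0 < lam" "lam < 1/8"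
    "vw * (q - 1/2) < vl * (1 - lam) * (1 - q)" "0 < eps"
  shows "\<exists>N::nat. \<forall>n. odd n \<and> 3 \<le> n \<and> N < n \<longrightarrow>
           (\<exists>\<sigma>. is_strict_equilibrium n q lam vw vl \<sigma> \<and> 1 - win_prob n q lam \<sigma> \<ge> 1 - eps)"
proof -
  define \<delta> where "\<delta> = vl * (1 - lam) * (1 - q) - vw * (q - 1/2)"
  have dp: "\<delta> > 0" using assms(7) unfolding \<delta>_def by simp
  define N1 where "N1 = nat \<lceil>(3/2 * vw + vl) / \<delta>\<rceil>"
  obtain M0 where M0: "(4 * lam) ^ M0 < eps" using real_arch_pow_inv[OF assms(8), of "4 * lam"] assms(6) by auto
  define N where "N = max N1 (2 * M0)"
  show ?thesis
  proof (rule exI[of _ N], intro allI impI)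
    fix n assume n: "odd n \<and> 3 \<le> n \<and> N < n"
    define K where "K = num_winners n q"
    define m where "m = (n - 1) div 2"
    obtain j where j: "n = 2 * j + 1" using n oddE by blast
    have mj: "m = j" unfolding m_def j by simp
    have mr: "real m = (real n - 1) / 2" unfolding mj j by simp
    have Kup: "real K < q * real n + 1"
    proof -
      have "0 \<le> q * real n" using assms(1) by simp
      then have "\<lceil>q * real n\<rceil> \<ge> 0" by simp
      then have "real K = of_int \<lceil>q * real n\<rceil>" unfolding K_def num_winners_def by simp
      then show ?thesis using ceiling_correct[of "q * real n"] by linarith
    qed
    have nN1: "real n > (3/2 * vw + vl) / \<delta>"
    proof -
      have "(3/2 * vw + vl) / \<delta> \<le> real N1" unfolding N1_def by linarith
      moreover have "N1 < n" using n unfolding N_def by simp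
      ultimately show ?thesis by linarith
    qed
    then have nd: "real n * \<delta> > 3/2 * vw + vl" using dp by (simp add: divide_less_eq)
    have cond: "vw * (real K - real m) < vl * (1 - lam) * (real n - real K)"
    proof -
      have a: "vw * (real K - real m) \<le> vw * (q * real n + 1 - (real n - 1) / 2)"
      proof -
        have "real K - real m \<le> q * real n + 1 - (real n - 1) / 2" using Kup mr by linarith
        then show ?thesis using assms(3) by (intro mult_left_mono) auto
      qed
      have vp: "vl * (1 - lam) > 0" using assms(4,5,6) by simp
      have b: "vl * (1 - lam) * (real n - q * real n - 1) \<le> vl * (1 - lam) * (real n - real K)"
        using Kup vp by (intro mult_left_mono) auto
      have c: "vl * (1 - lam) \<le> vl" using assms(4,5) by (simp add: mult_le_cancel_left1 algebra_simps)
      have "vw * (q * real n + 1 - (real n - 1) / 2) < vl * (1 - lam) * (real n - q * real n - 1)"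
      proof -
        have eL: "vw * (q * real n + 1 - (real n - 1) / 2) = real n * (vw * (q - 1/2)) + 3/2 * vw"
          by (simp add: field_simps)
        have eR: "vl * (1 - lam) * (real n - q * real n - 1) = real n * (vl * (1 - lam) * (1 - q)) - vl * (1 - lam)"
          by (simp add: algebra_simps)
        have eD: "real n * \<delta> = real n * (vl * (1 - lam) * (1 - q)) - real n * (vw * (q - 1/2))"
          unfolding \<delta>_def by (simp add: algebra_simps)
        show ?thesis unfolding eL eR using nd eD c by linarith
      qed
      then show ?thesis using a b by linarith
    qed
    have strict: "is_strict_equilibrium n q lam vw vl sig0"
      using strict0[OF assms(1-4) _ assms(5)] n cond assms(6) unfolding K_def m_def by auto
    have Kn: "K \<le> n" using K_le[of q n] assms(1,2) unfolding K_def by auto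
    have "win_prob n q lam sig0 \<le> 2 ^ n * lam ^ (m + 1)"
      using win0_bound[of lam n q] assms(5,6) Kn unfolding K_def m_def by auto
    also have "2 ^ n * lam ^ (m + 1) = (2 * lam) * (4 * lam) ^ m"
      unfolding j mj by (simp add: power_mult_distrib power_add power_mult)
    also have "\<dots> \<le> 1 * (4 * lam) ^ m" using assms(5,6) by (intro mult_right_mono) auto
    also have "\<dots> \<le> (4 * lam) ^ M0"
    proof -
      have "M0 \<le> m" using n unfolding N_def mj j by auto
      moreover have "0 \<le> 4 * lam" "4 * lam \<le> 1" using assms(5,6) by auto
      ultimately have "(4 * lam) ^ m \<le> (4 * lam) ^ M0" by (rule power_decreasing)
      then show ?thesis by simp
    qed
    finally have "win_prob n q lam sig0 \<le> eps" using M0 by linarith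
    then show "\<exists>\<sigma>. is_strict_equilibrium n q lam vw vl \<sigma> \<and> 1 - win_prob n q lam \<sigma> \<ge> 1 - eps"
      using strict by auto
  qed
qed

theorem proposition5:
  fixes q vw vl :: real
  assumes "1/2 \<le> q" "q < 1" "0 < vw" "0 < vl" "vl / vw < q / (1 - q)"
  shows "(( q - 1/2) / (1 - q) < vl / vw \<longrightarrow>
            (\<exists>lstar>0. lstar \<le> 1 \<and>
               (\<forall>lam. 0 < lam \<and> lam < lstar \<longrightarrow>
                 (\<forall>\<epsilon>. 0 < \<epsilon> \<and> \<epsilon> < 1 \<longrightarrow>
                   (\<exists>N::nat. \<forall>n. odd n \<and> 3 \<le> n \<and> N < n \<longrightarrow>
                      (\<exists>\<sigma>. is_strict_equilibrium n q lam vw vl \<sigma> \<and>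
                           1 - win_prob n q lam \<sigma> \<ge> 1 - \<epsilon>))))))
       \<and> (vl / vw \<le> (q - 1/2) / (1 - q) \<longrightarrow>
            (\<forall>n lam \<sigma>. odd n \<and> 3 \<le> n \<and> 0 < lam \<and> lam < 1 \<and>
               is_equilibrium n q lam vw vl \<sigma> \<longrightarrow> win_prob n q lam \<sigma> = 1))"
proof (intro conjI impI)
  assume h: "(q - 1/2) / (1 - q) < vl / vw"
  define \<rho> where "\<rho> = (q - 1/2) / (1 - q)"
  define c where "c = vl / vw"
  have q1: "1 - q > 0" using assms(2) by simp
  have rho0: "\<rho> \<ge> 0" unfolding \<rho>_def using assms(1) q1 by simp
  have cp: "c > 0" unfolding c_def using assms(3,4) by simp
  have rc: "\<rho> < c" using h unfolding \<rho>_def c_def .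
  have rc1: "\<rho> / c < 1" using rc cp by simp
  have rc0: "\<rho> / c \<ge> 0" using rho0 cp by simp
  define lstar where "lstar = min (1/8) ((1 - \<rho> / c) / 2)"
  show "\<exists>lstar>0. lstar \<le> 1 \<and>
               (\<forall>lam. 0 < lam \<and> lam < lstar \<longrightarrow>
                 (\<forall>\<epsilon>. 0 < \<epsilon> \<and> \<epsilon> < 1 \<longrightarrow>
                   (\<exists>N::nat. \<forall>n. odd n \<and> 3 \<le> n \<and> N < n \<longrightarrow>
                      (\<exists>\<sigma>. is_strict_equilibrium n q lam vw vl \<sigma> \<and>
                           1 - win_prob n q lam \<sigma> \<ge> 1 - \<epsilon>))))"
  proof (rule exI[of _ lstar], intro conjI allI impI)
    show "lstar > 0" unfolding lstar_def using rc1 by simp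
    show "lstar \<le> 1" unfolding lstar_def by simp
    fix lam \<epsilon> :: real
    assume l: "0 < lam \<and> lam < lstar" and e: "0 < \<epsilon> \<and> \<epsilon> < 1"
    have l8: "lam < 1/8" using l unfolding lstar_def by simp
    have lr: "\<rho> / c < 1 - lam" using l unfolding lstar_def by simp
    then have "\<rho> < c * (1 - lam)" using cp by (simp add: divide_less_eq mult.commute)
    then have "(q - 1/2) / (1 - q) < vl / vw * (1 - lam)" unfolding \<rho>_def c_def .
    then have "(q - 1/2) < vl / vw * (1 - lam) * (1 - q)" using q1 by (simp add: divide_less_eq)
    then have "vw * (q - 1/2) < vw * (vl / vw * (1 - lam) * (1 - q))" using assms(3) by (intro mult_strict_left_mono)
    then have key: "vw * (q - 1/2) < vl * (1 - lam) * (1 - q)" using assms(3) by simp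
    show "\<exists>N::nat. \<forall>n. odd n \<and> 3 \<le> n \<and> N < n \<longrightarrow>
                      (\<exists>\<sigma>. is_strict_equilibrium n q lam vw vl \<sigma> \<and> 1 - win_prob n q lam \<sigma> \<ge> 1 - \<epsilon>)"
      using part1_lam[OF assms(1-4) _ l8 key] l e by auto
  qed
next
  assume h: "vl / vw \<le> (q - 1/2) / (1 - q)"
  show "\<forall>n lam \<sigma>. odd n \<and> 3 \<le> n \<and> 0 < lam \<and> lam < 1 \<and>
               is_equilibrium n q lam vw vl \<sigma> \<longrightarrow> win_prob n q lam \<sigma> = 1"
    using part2[OF assms(1-4) h] by blast
qed

end
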